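(* Let $t_\varepsilon$, $t$, $s_\varepsilon$, $s$ be as defined below. Then $\partial_Ut_\varepsilon\to\partial_Ut$ and $\partial_Us_\varepsilon\to\partial_Us$ as $\varepsilon\to0$, uniformly on compact subsets of $\{(U,X^1,X^2,V)\in\mathbb{R}^4: U\neq0\}=(\mathbb{R}\setminus\{0\})\times\mathbb{R}^3$.
   Context: Strict delta net: a net $(\delta_\varepsilon)_{\varepsilon\in(0,1]}$ of smooth compactly supported functions on $\mathbb{R}$ with $\operatorname{supp}\delta_\varepsilon\subseteq[-\varepsilon,\varepsilon]$, $\int\delta_\varepsilon\to1$ as $\varepsilon\to0$, and $\int|\delta_\varepsilon|\le C$ for some $C>0$ and small $\varepsilon$. The transformations: fix $f\in C^\infty(\mathbb{R}^2,\mathbb{R})$ and a strict delta net $(\delta_\varepsilon)_\varepsilon$; write $X=(X^1,X^2)$. Let $(x_\varepsilon)_\varepsilon=(x_\varepsilon^1,x_\varepsilon^2)_\varepsilon\in C^\infty(\mathbb{R}^2\times\mathbb{R},\mathbb{R}^2)^{(0,1]}$ be a fixed net such that for every compact $K\subseteq\mathbb{R}^2$ there is $\varepsilon_K$ such that for all $X\in K$ and $\varepsilon\le\varepsilon_K$, $U\mapsto x_\varepsilon(X,U)$ is the solution on all of $\mathbb{R}$ of $\partial_U^2x_\varepsilon^i(X,U)=\frac12\partial_if(x_\varepsilon(X,U))\,\delta_\varepsilon(U)$, $x_\varepsilon^i(X,-1)=X^i$, $\partial_Ux_\varepsilon^i(X,-1)=0$ ($i=1,2$) (such a net exists). Write $\dot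 x_\varepsilon^i=\partial_U x_\varepsilon^i$. Define $$w_\varepsilon(X,V,U)=V+\int_{-\varepsilon}^U\int_{-\varepsilon}^s\sum_{i=1}^2\partial_if(x_\varepsilon(X,r))\,\dot x_\varepsilon^i(X,r)\,\delta_\varepsilon(r)\,dr\,ds,\qquad v_\varepsilon(X,V,U)=w_\varepsilon(X,V,U)+\int_{-\varepsilon}^U f(x_\varepsilon(X,s))\delta_\varepsilon(s)\,ds,$$ $t_\varepsilon(U,X^1,X^2,V)=(U,x_\varepsilon^1(X,U),x_\varepsilon^2(X,U),v_\varepsilon(X,V,U))$ and $s_\varepsilon(U,X^1,X^2,V)=(U,x_\varepsilon^1(X,U),x_\varepsilon^2(X,U),w_\varepsilon(X,V,U))$. The limits: with $U_+=\max(U,0)$ and $H$ the Heaviside function ($H(U)=0$ for $U<0$, $H(U)=1$ for $U>0$), $x^i(X,U)=X^i+\frac12\partial_if(X)\,U_+$, $v(X,V,U)=V+f(X)H(U)+\frac14\sum_{i=1}^2(\partial_if(X))^2U_+$, $w(X,V,U)=V+\frac14\sum_{i=1}^2(\partial_if(X))^2U_+$, $t(U,X^1,X^2,V)=(U,x^1(X,U),x^2(X,U),v(X,V,U))$, $s(U,X^1,X^2,V)=(U,x^1(X,U),x^2(X,U),w(X,V,U))$; these are smooth for $U\ne0$. *)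

theory Defs
  imports "HOL-Analysis.Analysis"
begin

definition pdir :: "'a::euclidean_space \<Rightarrow> ('a \<Rightarrow> 'b::real_normed_vector) \<Rightarrow> 'a \<Rightarrow> 'b" where
  "pdir v g x = vector_derivative (\<lambda>t. g (x + t *\<^sub>R v)) (at 0)"

fun iter_pd :: "'a::euclidean_space list \<Rightarrow> ('a \<Rightarrow> 'b::real_normed_vector) \<Rightarrow> 'a \<Rightarrow> 'b" where
  "iter_pd [] g = g"
| "iter_pd (v # vs) g = pdir v (iter_pd vs g)"

definition smooth :: "('a::euclidean_space \<Rightarrow> 'b::real_normed_vector) \<Rightarrow> bool" where
  "smooth g \<longleftrightarrow> (\<forall>vs. set vs \<subseteq> Basis \<longrightarrow>
      continuous_on UNIV (iter_pd vs g) \<and>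
      (\<forall>v\<in>Basis. \<forall>x. (\<lambda>t. iter_pd vs g (x + t *\<^sub>R v)) differentiable (at 0)))"

definition strict_delta_net :: "(real \<Rightarrow> real \<Rightarrow> real) \<Rightarrow> bool" where
  "strict_delta_net \<delta> \<longleftrightarrow>
     (\<forall>e\<in>{0<..1}. smooth (\<delta> e) \<and> (\<forall>u. \<delta> e u \<noteq> 0 \<longrightarrow> u \<in> {-e..e}))
   \<and> ((\<lambda>e. integral UNIV (\<delta> e)) \<longlongrightarrow> 1) (at_right 0)
   \<and> (\<exists>C>0. \<forall>\<^sub>F e in at_right 0. integral UNIV (\<lambda>u. \<bar>\<delta> e u\<bar>) \<le> C)"

definition pd1 :: "(real \<times> real \<Rightarrow> real) \<Rightarrow> real \<times> real \<Rightarrow> real" where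
  "pd1 f X = deriv (\<lambda>a. f (a, snd X)) (fst X)"

definition pd2 :: "(real \<times> real \<Rightarrow> real) \<Rightarrow> real \<times> real \<Rightarrow> real" where
  "pd2 f X = deriv (\<lambda>b. f (fst X, b)) (snd X)"

definition oint :: "real \<Rightarrow> real \<Rightarrow> (real \<Rightarrow> real) \<Rightarrow> real" where
  "oint a b g = (if a \<le> b then integral {a..b} g else - integral {b..a} g)"

definition posp :: "real \<Rightarrow> real" where "posp U = max U 0"

definition heav :: "real \<Rightarrow> real" where "heav U = (if U > 0 then 1 else 0)"

text \<open>x e X U = x_eps(X,U) in R^2; xd = partial_U x_eps.\<close>
definition xd :: "(real \<Rightarrow> real \<times> real \<Rightarrow> real \<Rightarrow> real \<times> real) \<Rightarrow> real \<Rightarrow> real \<times> real \<Rightarrow> real \<Rightarrow> real \<times> real" where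
  "xd x e X U = vector_derivative (\<lambda>r. x e X r) (at U)"

definition w_eps where
  "w_eps f \<delta> x e X V U = V + oint (-e) U (\<lambda>s. oint (-e) s (\<lambda>r.
      (pd1 f (x e X r) * fst (xd x e X r) + pd2 f (x e X r) * snd (xd x e X r)) * \<delta> e r))"

definition v_eps where
  "v_eps f \<delta> x e X V U = w_eps f \<delta> x e X V U + oint (-e) U (\<lambda>s. f (x e X s) * \<delta> e s)"

definition t_eps :: "(real \<times> real \<Rightarrow> real) \<Rightarrow> (real \<Rightarrow> real \<Rightarrow> real) \<Rightarrow>
    (real \<Rightarrow> real \<times> real \<Rightarrow> real \<Rightarrow> real \<times> real) \<Rightarrow> real \<Rightarrow>
    real \<times> real \<times> real \<times> real \<Rightarrow> real \<times> real \<times> real \<times> real" where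
  "t_eps f \<delta> x e p = (case p of (U, X1, X2, V) \<Rightarrow>
     (U, fst (x e (X1, X2) U), snd (x e (X1, X2) U), v_eps f \<delta> x e (X1, X2) V U))"

definition s_eps :: "(real \<times> real \<Rightarrow> real) \<Rightarrow> (real \<Rightarrow> real \<Rightarrow> real) \<Rightarrow>
    (real \<Rightarrow> real \<times> real \<Rightarrow> real \<Rightarrow> real \<times> real) \<Rightarrow> real \<Rightarrow>
    real \<times> real \<times> real \<times> real \<Rightarrow> real \<times> real \<times> real \<times> real" where
  "s_eps f \<delta> x e p = (case p of (U, X1, X2, V) \<Rightarrow>
     (U, fst (x e (X1, X2) U), snd (x e (X1, X2) U), w_eps f \<delta> x e (X1, X2) V U))"

definition x_lim :: "(real \<times> real \<Rightarrow> real) \<Rightarrow> real \<times> real \<Rightarrow> real \<Rightarrow> real \<times> real" where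
  "x_lim f X U = (fst X + 1/2 * pd1 f X * posp U, snd X + 1/2 * pd2 f X * posp U)"

definition w_lim :: "(real \<times> real \<Rightarrow> real) \<Rightarrow> real \<times> real \<Rightarrow> real \<Rightarrow> real \<Rightarrow> real" where
  "w_lim f X V U = V + 1/4 * ((pd1 f X)\<^sup>2 + (pd2 f X)\<^sup>2) * posp U"

definition v_lim :: "(real \<times> real \<Rightarrow> real) \<Rightarrow> real \<times> real \<Rightarrow> real \<Rightarrow> real \<Rightarrow> real" where
  "v_lim f X V U = V + f X * heav U + 1/4 * ((pd1 f X)\<^sup>2 + (pd2 f X)\<^sup>2) * posp U"

definition t_lim :: "(real \<times> real \<Rightarrow> real) \<Rightarrow>
    real \<times> real \<times> real \<times> real \<Rightarrow> real \<times> real \<times> real \<times> real" where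
  "t_lim f p = (case p of (U, X1, X2, V) \<Rightarrow>
     (U, fst (x_lim f (X1, X2) U), snd (x_lim f (X1, X2) U), v_lim f (X1, X2) V U))"

definition s_lim :: "(real \<times> real \<Rightarrow> real) \<Rightarrow>
    real \<times> real \<times> real \<times> real \<Rightarrow> real \<times> real \<times> real \<times> real" where
  "s_lim f p = (case p of (U, X1, X2, V) \<Rightarrow>
     (U, fst (x_lim f (X1, X2) U), snd (x_lim f (X1, X2) U), w_lim f (X1, X2) V U))"

definition dU :: "(real \<times> real \<times> real \<times> real \<Rightarrow> 'b::real_normed_vector) \<Rightarrow>
    real \<times> real \<times> real \<times> real \<Rightarrow> 'b" where
  "dU F p = (case p of (U, Y) \<Rightarrow> vector_derivative (\<lambda>u. F (u, Y)) (at U))"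

end

theory Submission
  imports Defs
begin

lemma vd_fst:
  assumes "(g has_vector_derivative (a, b)) (at u)"
  shows "((\<lambda>u. fst (g u)) has_real_derivative a) (at u)"
proof -
  have "((\<lambda>u. fst (g u)) has_derivative (\<lambda>h. fst (h *\<^sub>R (a,b)))) (at u)"
    using assms unfolding has_vector_derivative_def by (intro derivative_intros)
  then show ?thesis unfolding has_field_derivative_def
    by (rule has_derivative_eq_rhs) (auto simp: fun_eq_iff)
qed

lemma vd_snd:
  assumes "(g has_vector_derivative (a, b)) (at u)"
  shows "((\<lambda>u. snd (g u)) has_real_derivative b) (at u)"
proof -
  have "((\<lambda>u. snd (g u)) has_derivative (\<lambda>h. snd (h *\<^sub>R (a,b)))) (at u)"
    using assms unfolding has_vector_derivative_def by (intro derivative_intros)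
  then show ?thesis unfolding has_field_derivative_def
    by (rule has_derivative_eq_rhs) (auto simp: fun_eq_iff)
qed

lemma oint_ftc:
  assumes "\<And>u. (F has_real_derivative F' u) (at u)"
  shows "oint a b F' = F b - F a"
proof (cases "a \<le> b")
  case True
  have "(F' has_integral (F b - F a)) {a..b}"
    by (rule fundamental_theorem_of_calculus[OF True])
       (auto simp: has_real_derivative_iff_has_vector_derivative[symmetric]
             intro: has_field_derivative_at_within assms)
  then show ?thesis using True by (simp add: oint_def integral_unique)
next
  case False
  have "(F' has_integral (F a - F b)) {b..a}"
    by (rule fundamental_theorem_of_calculus)
       (use False in \<open>auto simp: has_real_derivative_iff_has_vector_derivative[symmetric]
             intro: has_field_derivative_at_within assms\<close>)
  then show ?thesis using False by (simp add: oint_def integral_unique)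
qed

lemma oint_deriv:
  fixes g :: "real \<Rightarrow> real"
  assumes g: "continuous_on UNIV g"
  shows "((\<lambda>u. oint a u g) has_real_derivative g U) (at U)"
proof -
  define lo where "lo = min a U - 1"
  define hi where "hi = max a U + 1"
  have int: "g integrable_on {lo..hi}"
    by (rule integrable_continuous_real) (rule continuous_on_subset[OF g], auto)
  have intsub: "g integrable_on {c..d}" if "lo \<le> c" "d \<le> hi" for c d
    by (rule integrable_on_subinterval[OF int]) (use that in auto)
  have eq: "oint a u g = integral {lo..u} g - integral {lo..a} g" if "u \<in> {lo<..<hi}" for u
  proof (cases "a \<le> u")
    case True
    have "integral {lo..a} g + integral {a..u} g = integral {lo..u} g"
      by (rule Henstock_Kurzweil_Integration.integral_combine) (use True that in \<open>auto simp: lo_def intro!: intsub\<close>)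
    then show ?thesis using True by (simp add: oint_def)
  next
    case False
    have "integral {lo..u} g + integral {u..a} g = integral {lo..a} g"
      by (rule Henstock_Kurzweil_Integration.integral_combine) (use False that in \<open>auto intro!: intsub simp: hi_def\<close>)
    then show ?thesis using False by (simp add: oint_def)
  qed
  have "((\<lambda>u. integral {lo..u} g) has_vector_derivative g U) (at U within {lo..hi})"
    by (rule integral_has_vector_derivative) (auto simp: lo_def hi_def intro: continuous_on_subset[OF g])
  then have "((\<lambda>u. integral {lo..u} g) has_vector_derivative g U) (at U)"
  proof -
    have "lo < U \<and> U < hi" by (auto simp: lo_def hi_def)
    then have "at U within {lo..hi} = at U" using at_within_interior[of U "{lo..hi}"] by simp
    with \<open>((\<lambda>u. integral {lo..u} g) has_vector_derivative g U) (at U within {lo..hi})\<close> show ?thesis by simp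
  qed
  then have "((\<lambda>u. integral {lo..u} g - integral {lo..a} g) has_real_derivative g U) (at U)"
    by (auto simp: has_real_derivative_iff_has_vector_derivative intro!: derivative_eq_intros)
  then show ?thesis
    by (rule has_field_derivative_transform_within_open[where S="{lo<..<hi}"])
       (auto simp: lo_def hi_def eq)
qed

lemma smooth_cont: "smooth g \<Longrightarrow> continuous_on UNIV g"
  unfolding smooth_def by (metis empty_subsetI empty_set iter_pd.simps(1))

lemma smooth_diff: "smooth g \<Longrightarrow> v \<in> Basis \<Longrightarrow> (\<lambda>t. g (x + t *\<^sub>R v)) differentiable (at 0)"
  unfolding smooth_def by (metis empty_subsetI empty_set iter_pd.simps(1))

lemma smooth_pdir_cont: "smooth g \<Longrightarrow> v \<in> Basis \<Longrightarrow> continuous_on UNIV (pdir v g)"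
  unfolding smooth_def by (drule spec[of _ "[v]"]) auto

lemma pd1_eq: assumes "smooth (f :: real \<times> real \<Rightarrow> real)"
  shows "pd1 f X = pdir (1,0) f X"
proof -
  define h where "h t = f (X + t *\<^sub>R (1,0))" for t :: real
  have "h differentiable (at 0)" unfolding h_def
    by (rule smooth_diff[OF assms]) (simp add: Basis_prod_def)
  then have hd: "(h has_real_derivative vector_derivative h (at 0)) (at 0)"
    by (simp add: has_real_derivative_iff_has_vector_derivative vector_derivative_works)
  have "((\<lambda>a. h (a - fst X)) has_real_derivative vector_derivative h (at 0) * 1) (at (fst X))"
    by (rule DERIV_chain2[where f=h]) (use hd in \<open>auto intro!: derivative_eq_intros\<close>)
  moreover have "(\<lambda>a. h (a - fst X)) = (\<lambda>a. f (a, snd X))"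
    by (cases X) (auto simp: h_def fun_eq_iff)
  ultimately have "deriv (\<lambda>a. f (a, snd X)) (fst X) = vector_derivative h (at 0)"
    by (simp add: DERIV_imp_deriv)
  then show ?thesis by (simp add: pd1_def pdir_def h_def[abs_def])
qed

lemma pd2_eq: assumes "smooth (f :: real \<times> real \<Rightarrow> real)"
  shows "pd2 f X = pdir (0,1) f X"
proof -
  define h where "h t = f (X + t *\<^sub>R (0,1))" for t :: real
  have "h differentiable (at 0)" unfolding h_def
    by (rule smooth_diff[OF assms]) (simp add: Basis_prod_def)
  then have hd: "(h has_real_derivative vector_derivative h (at 0)) (at 0)"
    by (simp add: has_real_derivative_iff_has_vector_derivative vector_derivative_works)
  have "((\<lambda>a. h (a - snd X)) has_real_derivative vector_derivative h (at 0) * 1) (at (snd X))"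
    by (rule DERIV_chain2[where f=h]) (use hd in \<open>auto intro!: derivative_eq_intros\<close>)
  moreover have "(\<lambda>a. h (a - snd X)) = (\<lambda>b. f (fst X, b))"
    by (cases X) (auto simp: h_def fun_eq_iff)
  ultimately have "deriv (\<lambda>b. f (fst X, b)) (snd X) = vector_derivative h (at 0)"
    by (simp add: DERIV_imp_deriv)
  then show ?thesis by (simp add: pd2_def pdir_def h_def[abs_def])
qed

lemma pd1_cont: "smooth f \<Longrightarrow> continuous_on UNIV (pd1 f)"
  using smooth_pdir_cont[of f "(1,0)"] pd1_eq[of f] by (simp add: Basis_prod_def fun_eq_iff[symmetric])

lemma pd2_cont: "smooth f \<Longrightarrow> continuous_on UNIV (pd2 f)"
  using smooth_pdir_cont[of f "(0,1)"] pd2_eq[of f] by (simp add: Basis_prod_def fun_eq_iff[symmetric])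

lemma const_on:
  fixes g :: "real \<Rightarrow> real"
  assumes d: "\<And>u. (g has_real_derivative g' u) (at u)"
    and z: "\<And>u. lo < u \<Longrightarrow> u < hi \<Longrightarrow> g' u = 0"
    and y: "lo \<le> y" "y \<le> hi"
  shows "g y = g lo"
proof (cases "lo < hi")
  case True
  show ?thesis
  proof (rule DERIV_isconst2[OF True _ _ y])
    show "continuous_on {lo..hi} g"
      by (meson DERIV_continuous continuous_at_imp_continuous_on d)
    show "\<And>x. lo < x \<Longrightarrow> x < hi \<Longrightarrow> DERIV g x :> 0"
      using d z by metis
  qed
next
  case False
  then have "y = lo" using y by linarith
  then show ?thesis by simp
qed

locale traj =
  fixes e :: real and d q1 q2 and a1 a2 b1 b2 :: "real \<Rightarrow> real" and X1 X2 :: real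
  assumes e: "0 < e" "e \<le> 1"
  and dcont: "continuous_on UNIV d"
  and dsupp: "\<And>r. d r \<noteq> 0 \<Longrightarrow> -e \<le> r \<and> r \<le> e"
  and q1cont: "continuous_on UNIV q1" and q2cont: "continuous_on UNIV q2"
  and init: "a1 (-1) = X1" "a2 (-1) = X2" "b1 (-1) = 0" "b2 (-1) = 0"
  and da1: "\<And>u. (a1 has_real_derivative b1 u) (at u)"
  and da2: "\<And>u. (a2 has_real_derivative b2 u) (at u)"
  and db1: "\<And>u. (b1 has_real_derivative (1/2 * q1 (a1 u, a2 u) * d u)) (at u)"
  and db2: "\<And>u. (b2 has_real_derivative (1/2 * q2 (a1 u, a2 u) * d u)) (at u)"
begin

lemma d_out: "r < -e \<or> e < r \<Longrightarrow> d r = 0"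
  using dsupp by force

lemma left:
  assumes "u \<le> -e"
  shows "b1 u = 0" "b2 u = 0" "a1 u = X1" "a2 u = X2"
proof -
  define lo where "lo = min u (-1)"
  have l1: "lo \<le> u" "lo \<le> -1" "-1 \<le> -e" using e by (auto simp: lo_def)
  have bz: "b1 v = 0 \<and> b2 v = 0" if "v \<le> -e" "lo \<le> v" for v
  proof -
    have "b1 v = b1 lo" "b1 (-1) = b1 lo"
      by (rule const_on[OF db1, where hi="-e"], use d_out that l1 in auto)+
    moreover have "b2 v = b2 lo" "b2 (-1) = b2 lo"
      by (rule const_on[OF db2, where hi="-e"], use d_out that l1 in auto)+
    ultimately show ?thesis using init by simp
  qed
  show "b1 u = 0" "b2 u = 0" using bz assms l1 by auto
  have "a1 u = a1 lo" "a1 (-1) = a1 lo"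
    by (rule const_on[OF da1, where hi="-e"], use bz l1 assms in auto)+
  moreover have "a2 u = a2 lo" "a2 (-1) = a2 lo"
    by (rule const_on[OF da2, where hi="-e"], use bz l1 assms in auto)+
  ultimately show "a1 u = X1" "a2 u = X2" using init by simp_all
qed

lemma right:
  assumes "e \<le> u"
  shows "b1 u = b1 e" "b2 u = b2 e"
  by (rule const_on[OF db1] const_on[OF db2], use d_out assms in auto)+

lemma b1_int:
  assumes "-e \<le> u"
  shows "b1 u = integral {-e..u} (\<lambda>r. 1/2 * q1 (a1 r, a2 r) * d r)"
proof -
  have "((\<lambda>r. 1/2 * q1 (a1 r, a2 r) * d r) has_integral (b1 u - b1 (-e))) {-e..u}"
    by (rule fundamental_theorem_of_calculus[OF assms])
       (unfold has_real_derivative_iff_has_vector_derivative[symmetric],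
        rule has_field_derivative_at_within, rule db1)
  moreover have "b1 (-e) = 0" "b2 (-e) = 0" using left[of "-e"] by auto
  ultimately show ?thesis by (metis integral_unique diff_zero)
qed

lemma b2_int:
  assumes "-e \<le> u"
  shows "b2 u = integral {-e..u} (\<lambda>r. 1/2 * q2 (a1 r, a2 r) * d r)"
proof -
  have "((\<lambda>r. 1/2 * q2 (a1 r, a2 r) * d r) has_integral (b2 u - b2 (-e))) {-e..u}"
    by (rule fundamental_theorem_of_calculus[OF assms])
       (unfold has_real_derivative_iff_has_vector_derivative[symmetric],
        rule has_field_derivative_at_within, rule db2)
  moreover have "b1 (-e) = 0" "b2 (-e) = 0" using left[of "-e"] by auto
  ultimately show ?thesis by (metis integral_unique diff_zero)
qed

lemma w_inner:
  "oint (-e) s (\<lambda>r. (q1 (a1 r, a2 r) * b1 r + q2 (a1 r, a2 r) * b2 r) * d r) = (b1 s)\<^sup>2 + (b2 s)\<^sup>2"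
proof -
  have "oint (-e) s (\<lambda>r. (q1 (a1 r, a2 r) * b1 r + q2 (a1 r, a2 r) * b2 r) * d r)
      = ((b1 s)\<^sup>2 + (b2 s)\<^sup>2) - ((b1 (-e))\<^sup>2 + (b2 (-e))\<^sup>2)"
  proof (rule oint_ftc[where F="\<lambda>r. (b1 r)\<^sup>2 + (b2 r)\<^sup>2"])
    fix u
    show "((\<lambda>r. (b1 r)\<^sup>2 + (b2 r)\<^sup>2) has_real_derivative
           (q1 (a1 u, a2 u) * b1 u + q2 (a1 u, a2 u) * b2 u) * d u) (at u)"
      by (rule derivative_eq_intros db1 db2 refl)+ (simp add: algebra_simps)
  qed
  then show ?thesis using left[of "-e"] by simp
qed

lemma a1_cont: "continuous_on UNIV a1"
  using da1 by (meson DERIV_continuous continuous_at_imp_continuous_on)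
lemma a2_cont: "continuous_on UNIV a2"
  using da2 by (meson DERIV_continuous continuous_at_imp_continuous_on)
lemma b1_cont: "continuous_on UNIV b1"
  using db1 by (meson DERIV_continuous continuous_at_imp_continuous_on)
lemma b2_cont: "continuous_on UNIV b2"
  using db2 by (meson DERIV_continuous continuous_at_imp_continuous_on)

end

lemma cint: "continuous_on UNIV (g::real\<Rightarrow>real) \<Longrightarrow> g integrable_on {a..b}"
  by (rule integrable_continuous_real) (rule continuous_on_subset, auto)

lemma gen_bbound:
  fixes qa b d :: "real \<Rightarrow> real"
  assumes dcont: "continuous_on UNIV d" and qcont: "continuous_on UNIV qa"
  and bint: "\<And>u. -e \<le> u \<Longrightarrow> b u = integral {-e..u} (\<lambda>r. 1/2 * qa r * d r)"
  and C: "integral {-e..e} (\<lambda>r. \<bar>d r\<bar>) \<le> C"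
  and qb: "\<And>r. -e \<le> r \<Longrightarrow> r < t \<Longrightarrow> \<bar>qa r\<bar> \<le> M"
  and t: "t \<le> e" and z: "-e \<le> z" "z < t" and M: "0 \<le> M"
  shows "\<bar>b z\<bar> \<le> M * C / 2"
proof -
  have dc: "continuous_on UNIV (\<lambda>r. \<bar>d r\<bar>)" by (intro continuous_intros dcont)
  have "\<bar>b z\<bar> = norm (integral {-e..z} (\<lambda>r. 1/2 * qa r * d r))" using bint[OF z(1)] by (simp only: real_norm_def)
  also have "\<dots> \<le> integral {-e..z} (\<lambda>r. M/2 * \<bar>d r\<bar>)"
  proof (rule integral_norm_bound_integral)
    show "(\<lambda>r. 1/2 * qa r * d r) integrable_on {-e..z}"
      by (rule cint) (intro continuous_intros dcont qcont)
    show "(\<lambda>r. M/2 * \<bar>d r\<bar>) integrable_on {-e..z}"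
      by (rule cint) (intro continuous_intros dcont)
    fix r assume r: "r \<in> {-e..z}"
    have "\<bar>qa r\<bar> \<le> M" using qb r z by auto
    then have "\<bar>qa r\<bar> * \<bar>d r\<bar> \<le> M * \<bar>d r\<bar>" by (rule mult_right_mono) simp
    then show "norm (1/2 * qa r * d r) \<le> M/2 * \<bar>d r\<bar>" by (simp add: abs_mult)
  qed
  also have "\<dots> = M/2 * integral {-e..z} (\<lambda>r. \<bar>d r\<bar>)" by (rule integral_mult[OF cint[OF dc], symmetric])
  also have "\<dots> \<le> M/2 * integral {-e..e} (\<lambda>r. \<bar>d r\<bar>)"
  proof (rule mult_left_mono)
    show "integral {-e..z} (\<lambda>r. \<bar>d r\<bar>) \<le> integral {-e..e} (\<lambda>r. \<bar>d r\<bar>)"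
      by (rule integral_subset_le) (use z t cint[OF dc] in auto)
  qed (use M in simp)
  also have "\<dots> \<le> M/2 * C" by (rule mult_left_mono[OF C]) (use M in simp)
  finally show ?thesis by simp
qed

lemma gen_est:
  fixes qa b d :: "real \<Rightarrow> real"
  assumes dcont: "continuous_on UNIV d" and qcont: "continuous_on UNIV qa"
  and bint: "\<And>u. -e \<le> u \<Longrightarrow> b u = integral {-e..u} (\<lambda>r. 1/2 * qa r * d r)"
  and C: "integral {-e..e} (\<lambda>r. \<bar>d r\<bar>) \<le> C"
  and eta: "0 \<le> \<eta>" and e: "0 < e"
  and qe: "\<And>r. -e \<le> r \<Longrightarrow> r \<le> e \<Longrightarrow> \<bar>qa r - Q\<bar> \<le> \<eta>"
  shows "\<bar>b e - 1/2 * Q * integral {-e..e} d\<bar> \<le> \<eta> * C / 2"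
proof -
  have i1: "(\<lambda>r. 1/2 * qa r * d r) integrable_on {-e..e}"
    by (rule cint) (intro continuous_intros dcont qcont)
  have i2: "(\<lambda>r. 1/2 * Q * d r) integrable_on {-e..e}"
    by (rule cint) (intro continuous_intros dcont)
  have "b e - 1/2 * Q * integral {-e..e} d
      = integral {-e..e} (\<lambda>r. 1/2 * qa r * d r) - integral {-e..e} (\<lambda>r. 1/2 * Q * d r)"
  proof -
    have be: "b e = integral {-e..e} (\<lambda>r. 1/2 * qa r * d r)" by (rule bint) (use e in simp)
    have qi: "1/2*Q*integral {-e..e} d = integral {-e..e} (\<lambda>r. 1/2*Q*d r)"
      by (rule integral_mult[OF cint[OF dcont]])
    show ?thesis unfolding be qi by (rule refl)
  qed
  also have "\<dots> = integral {-e..e} (\<lambda>r. 1/2 * qa r * d r - 1/2 * Q * d r)"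
    by (rule integral_diff[OF i1 i2, symmetric])
  finally have eq: "b e - 1/2 * Q * integral {-e..e} d = integral {-e..e} (\<lambda>r. 1/2 * qa r * d r - 1/2 * Q * d r)" .
  have "norm (integral {-e..e} (\<lambda>r. 1/2 * qa r * d r - 1/2 * Q * d r)) \<le> integral {-e..e} (\<lambda>r. \<eta>/2 * \<bar>d r\<bar>)"
  proof (rule integral_norm_bound_integral)
    show "(\<lambda>r. 1/2 * qa r * d r - 1/2 * Q * d r) integrable_on {-e..e}"
      by (rule cint) (intro continuous_intros dcont qcont)
    show "(\<lambda>r. \<eta>/2 * \<bar>d r\<bar>) integrable_on {-e..e}"
      by (rule cint) (intro continuous_intros dcont)
    fix r assume r: "r \<in> {-e..e}"
    have "\<bar>qa r - Q\<bar> \<le> \<eta>" using qe r by auto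
    then have "\<bar>qa r - Q\<bar> * \<bar>d r\<bar> \<le> \<eta> * \<bar>d r\<bar>" by (rule mult_right_mono) simp
    moreover have "1/2 * qa r * d r - 1/2 * Q * d r = 1/2 * ((qa r - Q) * d r)" by (simp add: algebra_simps)
    moreover have "\<bar>1/2 * ((qa r - Q) * d r)\<bar> = 1/2 * (\<bar>qa r - Q\<bar> * \<bar>d r\<bar>)"
      by (simp add: abs_mult)
    ultimately show "norm (1/2 * qa r * d r - 1/2 * Q * d r) \<le> \<eta>/2 * \<bar>d r\<bar>"
      by (simp only: real_norm_def)
  qed
  also have "\<dots> = \<eta>/2 * integral {-e..e} (\<lambda>r. \<bar>d r\<bar>)" by (rule integral_mult[OF cint, symmetric]) (intro continuous_intros dcont)
  also have "\<dots> \<le> \<eta>/2 * C" by (rule mult_left_mono[OF C]) (use eta in simp)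
  finally have "\<bar>b e - 1/2 * Q * integral {-e..e} d\<bar> \<le> \<eta>/2 * C" by (simp only: eq real_norm_def)
  then show ?thesis by simp
qed

lemma norm_pair_le: "norm (a::real, b::real) \<le> \<bar>a\<bar> + \<bar>b\<bar>"
  by (simp add: norm_Pair sqrt_sum_squares_le_sum_abs)

context traj begin

lemma qa1_cont: "continuous_on UNIV (\<lambda>r. q1 (a1 r, a2 r))"
  by (rule continuous_on_compose2[OF q1cont]) (auto intro!: continuous_intros a1_cont a2_cont)
lemma qa2_cont: "continuous_on UNIV (\<lambda>r. q2 (a1 r, a2 r))"
  by (rule continuous_on_compose2[OF q2cont]) (auto intro!: continuous_intros a1_cont a2_cont)

lemma a_bound:
  assumes b: "\<And>z. -e \<le> z \<Longrightarrow> z < t \<Longrightarrow> \<bar>b1 z\<bar> \<le> B \<and> \<bar>b2 z\<bar> \<le> B" and s: "-e \<le> s" "s \<le> t"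
  shows "\<bar>a1 s - X1\<bar> \<le> (s+e)*B \<and> \<bar>a2 s - X2\<bar> \<le> (s+e)*B"
proof (cases "s = -e")
  case True then show ?thesis using left[of "-e"] by simp
next
  case False
  then have lt: "-e < s" using s by simp
  obtain z1 where z1: "-e < z1" "z1 < s" "a1 s - a1 (-e) = (s - -e) * b1 z1"
    using MVT2[OF lt, of a1 b1] da1 by blast
  obtain z2 where z2: "-e < z2" "z2 < s" "a2 s - a2 (-e) = (s - -e) * b2 z2"
    using MVT2[OF lt, of a2 b2] da2 by blast
  have "\<bar>b1 z1\<bar> \<le> B" using b z1 z2 s by (meson less_eq_real_def less_le_trans)
  have "\<bar>b2 z2\<bar> \<le> B" using b z1 z2 s by (meson less_eq_real_def less_le_trans)
  note this \<open>\<bar>b1 z1\<bar> \<le> B\<close>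
  then have "(s+e) * \<bar>b1 z1\<bar> \<le> (s+e)*B" "(s+e) * \<bar>b2 z2\<bar> \<le> (s+e)*B"
    using lt by (simp_all add: mult_left_mono)
  moreover have "\<bar>a1 s - X1\<bar> = (s+e) * \<bar>b1 z1\<bar>" "\<bar>a2 s - X2\<bar> = (s+e) * \<bar>b2 z2\<bar>"
    using z1 z2 left[of "-e"] lt by (simp_all add: abs_mult)
  ultimately show ?thesis by simp
qed

lemma boot:
  assumes R: "norm (X1,X2) \<le> R" and qb: "\<And>y. norm y \<le> R+1 \<Longrightarrow> \<bar>q1 y\<bar> \<le> M \<and> \<bar>q2 y\<bar> \<le> M"
   and C: "integral {-e..e} (\<lambda>r. \<bar>d r\<bar>) \<le> C" and small: "2*e*M*C < 1/2"
   and r: "r \<le> e"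
  shows "\<bar>a1 r - X1\<bar> \<le> e*M*C \<and> \<bar>a2 r - X2\<bar> \<le> e*M*C"
proof -
  have M: "0 \<le> M" using qb[of "(X1,X2)"] R by force
  have dc: "continuous_on UNIV (\<lambda>r. \<bar>d r\<bar>)" by (intro continuous_intros dcont)
  have C0: "0 \<le> C"
    using C integral_nonneg[OF cint[OF dc], of "-e" e] by auto
  have MC: "0 \<le> M*C" using M C0 by simp
  have near: "\<bar>q1 (a1 r, a2 r)\<bar> \<le> M \<and> \<bar>q2 (a1 r, a2 r)\<bar> \<le> M"
    if "\<bar>a1 r - X1\<bar> < 1/2" "\<bar>a2 r - X2\<bar> < 1/2" for r
  proof -
    have "norm (a1 r, a2 r) \<le> norm (X1,X2) + norm (a1 r - X1, a2 r - X2)"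
      using norm_triangle_ineq[of "(X1,X2)" "(a1 r - X1, a2 r - X2)"] by simp
    also have "\<dots> \<le> R + 1" using R norm_pair_le[of "a1 r - X1" "a2 r - X2"] that by linarith
    finally show ?thesis using qb by blast
  qed
  define Bad where "Bad = {t. -e \<le> t \<and> t \<le> e \<and> (1/2 \<le> \<bar>a1 t - X1\<bar> \<or> 1/2 \<le> \<bar>a2 t - X2\<bar>)}"
  have step: "\<bar>a1 s - X1\<bar> \<le> e*M*C \<and> \<bar>a2 s - X2\<bar> \<le> e*M*C"
    if t: "t \<le> e" and good: "\<And>r. -e \<le> r \<Longrightarrow> r < t \<Longrightarrow> r \<notin> Bad" and s: "-e \<le> s" "s \<le> t" for t s
  proof -
    have qbt: "\<bar>q1 (a1 r, a2 r)\<bar> \<le> M \<and> \<bar>q2 (a1 r, a2 r)\<bar> \<le> M" if "-e \<le> r" "r < t" for r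
      using good[OF that] that t by (intro near) (auto simp: Bad_def)
    have "\<bar>b1 z\<bar> \<le> M*C/2 \<and> \<bar>b2 z\<bar> \<le> M*C/2" if "-e \<le> z" "z < t" for z
    proof
      show "\<bar>b1 z\<bar> \<le> M*C/2"
        by (rule gen_bbound[OF dcont qa1_cont b1_int C _ t that M]) (use qbt in auto)
      show "\<bar>b2 z\<bar> \<le> M*C/2"
        by (rule gen_bbound[OF dcont qa2_cont b2_int C _ t that M]) (use qbt in auto)
    qed
    from a_bound[OF this s] have "\<bar>a1 s - X1\<bar> \<le> (s+e)*(M*C/2) \<and> \<bar>a2 s - X2\<bar> \<le> (s+e)*(M*C/2)" .
    moreover have "(s+e)*(M*C/2) \<le> (2*e)*(M*C/2)"
      by (rule mult_right_mono) (use s t MC in auto)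
    ultimately show ?thesis by auto
  qed
  have "Bad = {}"
  proof (rule ccontr)
    assume ne: "Bad \<noteq> {}"
    have bdd: "bdd_below Bad" unfolding Bad_def by (rule bdd_belowI[of _ "-e"]) auto
    have "closed Bad"
    proof -
      have "Bad = {-e..e} \<inter> ({t. 1/2 \<le> \<bar>a1 t - X1\<bar>} \<union> {t. 1/2 \<le> \<bar>a2 t - X2\<bar>})"
        by (auto simp: Bad_def)
      also have "closed \<dots>"
        by (intro closed_Int closed_Un closed_Collect_le closed_atLeastAtMost continuous_on_const continuous_on_rabs continuous_on_diff a1_cont a2_cont)
      finally show ?thesis .
    qed
    then have t0: "Inf Bad \<in> Bad" using closed_contains_Inf[OF ne bdd] by blast
    have good: "r \<notin> Bad" if "-e \<le> r" "r < Inf Bad" for r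
    proof
      assume "r \<in> Bad"
      then have "Inf Bad \<le> r" using cInf_lower[OF _ bdd] by blast
      then show False using that by simp
    qed
    have "\<bar>a1 (Inf Bad) - X1\<bar> \<le> e*M*C \<and> \<bar>a2 (Inf Bad) - X2\<bar> \<le> e*M*C"
      by (rule step[OF _ good]) (use t0 in \<open>auto simp: Bad_def\<close>)
    moreover have "e*M*C < 1/2" using small by (simp add: mult.assoc)
    ultimately show False using t0 by (auto simp: Bad_def)
  qed
  show ?thesis
  proof (cases "r < -e")
    case True
    have "0 \<le> e*M*C" using e MC by (simp add: mult.assoc)
    then show ?thesis using left[of r] True by auto
  next
    case False
    have g: "\<And>r. -e \<le> r \<Longrightarrow> r < e \<Longrightarrow> r \<notin> Bad" using \<open>Bad = {}\<close> by blast
    show ?thesis by (rule step[OF order_refl g]) (use False r in linarith)+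
  qed
qed

lemma est1:
  assumes C: "integral {-e..e} (\<lambda>r. \<bar>d r\<bar>) \<le> C" and eta: "0 \<le> \<eta>"
  and qe: "\<And>r. -e \<le> r \<Longrightarrow> r \<le> e \<Longrightarrow> \<bar>q1 (a1 r, a2 r) - q1 (X1,X2)\<bar> \<le> \<eta>"
  shows "\<bar>b1 e - 1/2 * q1 (X1,X2) * integral {-e..e} d\<bar> \<le> \<eta> * C / 2"
  by (rule gen_est[OF dcont qa1_cont b1_int C eta e(1) qe])

lemma est2:
  assumes C: "integral {-e..e} (\<lambda>r. \<bar>d r\<bar>) \<le> C" and eta: "0 \<le> \<eta>"
  and qe: "\<And>r. -e \<le> r \<Longrightarrow> r \<le> e \<Longrightarrow> \<bar>q2 (a1 r, a2 r) - q2 (X1,X2)\<bar> \<le> \<eta>"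
  shows "\<bar>b2 e - 1/2 * q2 (X1,X2) * integral {-e..e} d\<bar> \<le> \<eta> * C / 2"
  by (rule gen_est[OF dcont qa2_cont b2_int C eta e(1) qe])

end

lemma vd4:
  fixes g1 g2 g3 :: "real \<Rightarrow> real"
  assumes "(g1 has_real_derivative d1) (at U)" "(g2 has_real_derivative d2) (at U)"
    "(g3 has_real_derivative d3) (at U)"
  shows "vector_derivative (\<lambda>u. (u, g1 u, g2 u, g3 u)) (at U) = (1, d1, d2, d3)"
  by (rule vector_derivative_at)
     (use assms in \<open>auto simp: has_real_derivative_iff_has_vector_derivative
        intro!: has_vector_derivative_Pair has_vector_derivative_id\<close>)

lemma posp_deriv: "U \<noteq> 0 \<Longrightarrow> (posp has_real_derivative heav U) (at U)"
proof (cases "U > 0")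
  case True
  have "((\<lambda>u. u) has_real_derivative heav U) (at U)" using DERIV_ident True by (simp add: heav_def)
  then show ?thesis
    by (rule has_field_derivative_transform_within_open[where S="{0<..}"])
       (use True in \<open>auto simp: posp_def heav_def\<close>)
next
  case False
  assume "U \<noteq> 0"
  with False have U: "U < 0" by simp
  have "((\<lambda>u. 0) has_real_derivative heav U) (at U)" using DERIV_const U by (simp add: heav_def)
  then show ?thesis
    by (rule has_field_derivative_transform_within_open[where S="{..<0}"])
       (use U in \<open>auto simp: posp_def heav_def\<close>)
qed

lemma heav_deriv: "U \<noteq> 0 \<Longrightarrow> (heav has_real_derivative 0) (at U)"
proof (cases "U > 0")
  case True
  have "((\<lambda>u. 1) has_real_derivative 0) (at U)" by (rule DERIV_const)
  then show ?thesis
    by (rule has_field_derivative_transform_within_open[where S="{0<..}"])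
       (use True in \<open>auto simp: heav_def\<close>)
next
  case False
  assume "U \<noteq> 0"
  with False have U: "U < 0" by simp
  have "((\<lambda>u. 0) has_real_derivative 0) (at U)" by (rule DERIV_const)
  then show ?thesis
    by (rule has_field_derivative_transform_within_open[where S="{..<0}"])
       (use U in \<open>auto simp: heav_def\<close>)
qed

lemma dU_t_lim:
  assumes "U \<noteq> 0"
  shows "dU (t_lim f) (U, X1, X2, V) = (1, 1/2 * pd1 f (X1,X2) * heav U, 1/2 * pd2 f (X1,X2) * heav U,
      1/4 * ((pd1 f (X1,X2))\<^sup>2 + (pd2 f (X1,X2))\<^sup>2) * heav U)" (is "_ = ?R")
proof -
  have "dU (t_lim f) (U, X1, X2, V) = vector_derivative (\<lambda>u. (u, X1 + 1/2 * pd1 f (X1,X2) * posp u,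
      X2 + 1/2 * pd2 f (X1,X2) * posp u, V + f (X1,X2) * heav u + 1/4 * ((pd1 f (X1,X2))\<^sup>2 + (pd2 f (X1,X2))\<^sup>2) * posp u)) (at U)"
    by (simp add: dU_def t_lim_def x_lim_def v_lim_def)
  also have "\<dots> = ?R"
    by (rule vd4) (rule derivative_eq_intros posp_deriv[OF assms] heav_deriv[OF assms] refl | simp)+
  finally show ?thesis .
qed

lemma dU_s_lim:
  assumes "U \<noteq> 0"
  shows "dU (s_lim f) (U, X1, X2, V) = (1, 1/2 * pd1 f (X1,X2) * heav U, 1/2 * pd2 f (X1,X2) * heav U,
      1/4 * ((pd1 f (X1,X2))\<^sup>2 + (pd2 f (X1,X2))\<^sup>2) * heav U)" (is "_ = ?R")
proof -
  have "dU (s_lim f) (U, X1, X2, V) = vector_derivative (\<lambda>u. (u, X1 + 1/2 * pd1 f (X1,X2) * posp u,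
      X2 + 1/2 * pd2 f (X1,X2) * posp u, V + 1/4 * ((pd1 f (X1,X2))\<^sup>2 + (pd2 f (X1,X2))\<^sup>2) * posp u)) (at U)"
    by (simp add: dU_def s_lim_def x_lim_def w_lim_def)
  also have "\<dots> = ?R"
    by (rule vd4) (rule derivative_eq_intros posp_deriv[OF assms] refl | simp)+
  finally show ?thesis .
qed

locale odeF =
  fixes f :: "real \<times> real \<Rightarrow> real" and \<delta> :: "real \<Rightarrow> real \<Rightarrow> real"
    and x :: "real \<Rightarrow> real \<times> real \<Rightarrow> real \<Rightarrow> real \<times> real" and e X1 X2
  assumes fs: "smooth f" and e: "0 < e" "e \<le> 1"
  and dcont: "continuous_on UNIV (\<delta> e)" and dsupp: "\<And>r. \<delta> e r \<noteq> 0 \<Longrightarrow> -e \<le> r \<and> r \<le> e"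
  and ode: "x e (X1,X2) (-1) = (X1,X2) \<and> xd x e (X1,X2) (-1) = (0, 0) \<and>
        (\<forall>U. ((\<lambda>u. x e (X1,X2) u) has_vector_derivative xd x e (X1,X2) U) (at U) \<and>
             (xd x e (X1,X2) has_vector_derivative
                ((1/2) * pd1 f (x e (X1,X2) U) * \<delta> e U, (1/2) * pd2 f (x e (X1,X2) U) * \<delta> e U)) (at U))"
begin

abbreviation "XX \<equiv> (X1, X2)"


lemma is_traj: "traj e (\<delta> e) (pd1 f) (pd2 f) (\<lambda>u. fst (x e XX u)) (\<lambda>u. snd (x e XX u))
   (\<lambda>u. fst (xd x e XX u)) (\<lambda>u. snd (xd x e XX u)) X1 X2"
proof
  show "0 < e" "e \<le> 1" by (rule e)+
  show "continuous_on UNIV (\<delta> e)" by (rule dcont)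
  show "\<And>r. \<delta> e r \<noteq> 0 \<Longrightarrow> -e \<le> r \<and> r \<le> e" by (rule dsupp)
  show "continuous_on UNIV (pd1 f)" "continuous_on UNIV (pd2 f)"
    using pd1_cont[OF fs] pd2_cont[OF fs] .
  show "fst (x e XX (-1)) = X1" "snd (x e XX (-1)) = X2"
    "fst (xd x e XX (-1)) = 0" "snd (xd x e XX (-1)) = 0" using ode by auto
  fix u
  have xv: "((\<lambda>u. x e XX u) has_vector_derivative (fst (xd x e XX u), snd (xd x e XX u))) (at u)"
    using ode by simp
  show "((\<lambda>u. fst (x e XX u)) has_real_derivative fst (xd x e XX u)) (at u)"
    by (rule vd_fst[OF xv])
  show "((\<lambda>u. snd (x e XX u)) has_real_derivative snd (xd x e XX u)) (at u)"
    by (rule vd_snd[OF xv])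
  have xdv: "(xd x e XX has_vector_derivative
                ((1/2) * pd1 f (x e XX u) * \<delta> e u, (1/2) * pd2 f (x e XX u) * \<delta> e u)) (at u)"
    using ode by simp
  show "((\<lambda>u. fst (xd x e XX u)) has_real_derivative 1/2 * pd1 f (fst (x e XX u), snd (x e XX u)) * \<delta> e u) (at u)"
    using vd_fst[OF xdv] by simp
  show "((\<lambda>u. snd (xd x e XX u)) has_real_derivative 1/2 * pd2 f (fst (x e XX u), snd (x e XX u)) * \<delta> e u) (at u)"
    using vd_snd[OF xdv] by simp
qed

interpretation T: traj e "\<delta> e" "pd1 f" "pd2 f" "\<lambda>u. fst (x e XX u)" "\<lambda>u. snd (x e XX u)"
   "\<lambda>u. fst (xd x e XX u)" "\<lambda>u. snd (xd x e XX u)" X1 X2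
  by (rule is_traj)

lemma w_eq: "w_eps f \<delta> x e XX V u = V + oint (-e) u (\<lambda>s. (fst (xd x e XX s))\<^sup>2 + (snd (xd x e XX s))\<^sup>2)"
  using T.w_inner by (simp add: w_eps_def)

lemma x_cont: "continuous_on UNIV (x e XX)"
  using ode by (meson continuous_at_imp_continuous_on has_vector_derivative_continuous)

lemma c1: "continuous_on UNIV (\<lambda>s. (fst (xd x e XX s))\<^sup>2 + (snd (xd x e XX s))\<^sup>2)"
  by (intro continuous_intros T.b1_cont T.b2_cont)

lemma dU_s: "dU (s_eps f \<delta> x e) (U, X1, X2, V) =
   (1, fst (xd x e XX U), snd (xd x e XX U), (fst (xd x e XX U))\<^sup>2 + (snd (xd x e XX U))\<^sup>2)"
proof -
  have "dU (s_eps f \<delta> x e) (U, X1, X2, V) = vector_derivative (\<lambda>u. (u, fst (x e XX u), snd (x e XX u),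
     V + oint (-e) u (\<lambda>s. (fst (xd x e XX s))\<^sup>2 + (snd (xd x e XX s))\<^sup>2))) (at U)"
    by (simp add: dU_def s_eps_def w_eq)
  also have "\<dots> = (1, fst (xd x e XX U), snd (xd x e XX U), (fst (xd x e XX U))\<^sup>2 + (snd (xd x e XX U))\<^sup>2)"
  proof (rule vd4)
    show "((\<lambda>u. V + oint (-e) u (\<lambda>s. (fst (xd x e XX s))\<^sup>2 + (snd (xd x e XX s))\<^sup>2)) has_real_derivative
       (fst (xd x e XX U))\<^sup>2 + (snd (xd x e XX U))\<^sup>2) (at U)"
      using oint_deriv[OF c1, of "-e" U]
      by (auto intro!: derivative_eq_intros continuous_intros T.b1_cont T.b2_cont)
  qed (rule T.da1 T.da2)+
  finally show ?thesis .
qed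

lemma dU_t: "dU (t_eps f \<delta> x e) (U, X1, X2, V) =
   (1, fst (xd x e XX U), snd (xd x e XX U), (fst (xd x e XX U))\<^sup>2 + (snd (xd x e XX U))\<^sup>2 + f (x e XX U) * \<delta> e U)"
proof -
  have "dU (t_eps f \<delta> x e) (U, X1, X2, V) = vector_derivative (\<lambda>u. (u, fst (x e XX u), snd (x e XX u),
     V + oint (-e) u (\<lambda>s. (fst (xd x e XX s))\<^sup>2 + (snd (xd x e XX s))\<^sup>2) + oint (-e) u (\<lambda>s. f (x e XX s) * \<delta> e s))) (at U)"
    by (simp add: dU_def t_eps_def v_eps_def w_eq)
  also have "\<dots> = (1, fst (xd x e XX U), snd (xd x e XX U), (fst (xd x e XX U))\<^sup>2 + (snd (xd x e XX U))\<^sup>2 + f (x e XX U) * \<delta> e U)"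
  proof (rule vd4)
    have c2: "continuous_on UNIV (\<lambda>s. f (x e XX s) * \<delta> e s)"
      by (intro continuous_intros dcont continuous_on_compose2[OF smooth_cont[OF fs] x_cont]) auto
    show "((\<lambda>u. V + oint (-e) u (\<lambda>s. (fst (xd x e XX s))\<^sup>2 + (snd (xd x e XX s))\<^sup>2) + oint (-e) u (\<lambda>s. f (x e XX s) * \<delta> e s)) has_real_derivative
       (fst (xd x e XX U))\<^sup>2 + (snd (xd x e XX U))\<^sup>2 + f (x e XX U) * \<delta> e U) (at U)"
      using oint_deriv[OF c1, of "-e" U]
        oint_deriv[OF c2, of "-e" U]
      by (auto intro!: derivative_eq_intros continuous_intros T.b1_cont T.b2_cont)
  qed (rule T.da1 T.da2)+
  finally show ?thesis .
qed

end

lemma supp_int: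
  fixes g :: "real \<Rightarrow> real"
  assumes "\<And>r. g r \<noteq> 0 \<Longrightarrow> -e \<le> r \<and> r \<le> e"
  shows "integral UNIV g = integral {-e..e} g"
proof -
  have "(\<lambda>x. if x \<in> {-e..e} then g x else 0) = g" using assms by (force simp: fun_eq_iff)
  then show ?thesis using integral_restrict_UNIV[of "{-e..e}" g] by simp
qed

context odeF begin

interpretation T: traj e "\<delta> e" "pd1 f" "pd2 f" "\<lambda>u. fst (x e XX u)" "\<lambda>u. snd (x e XX u)"
   "\<lambda>u. fst (xd x e XX u)" "\<lambda>u. snd (xd x e XX u)" X1 X2
  by (rule is_traj)

lemma est_point:
  assumes R: "norm XX \<le> R" and qb: "\<And>y. norm y \<le> R+1 \<Longrightarrow> \<bar>pd1 f y\<bar> \<le> M \<and> \<bar>pd2 f y\<bar> \<le> M"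
   and C: "integral UNIV (\<lambda>r. \<bar>\<delta> e r\<bar>) \<le> C"
   and small: "2*e*M*C < 1/2" and small2: "2*e*M*C < d0"
   and uc: "\<And>y y'. norm y \<le> R+1 \<Longrightarrow> norm y' \<le> R+1 \<Longrightarrow> dist y' y < d0 \<Longrightarrow>
          \<bar>pd1 f y' - pd1 f y\<bar> < \<eta> \<and> \<bar>pd2 f y' - pd2 f y\<bar> < \<eta>"
   and I: "\<bar>integral UNIV (\<delta> e) - 1\<bar> \<le> \<gamma>"
  shows "\<bar>fst (xd x e XX e) - 1/2 * pd1 f XX\<bar> \<le> \<eta>*C/2 + M*\<gamma>/2"
    "\<bar>snd (xd x e XX e) - 1/2 * pd2 f XX\<bar> \<le> \<eta>*C/2 + M*\<gamma>/2"
proof -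
  have Ceq: "integral UNIV (\<lambda>r. \<bar>\<delta> e r\<bar>) = integral {-e..e} (\<lambda>r. \<bar>\<delta> e r\<bar>)"
    by (rule supp_int) (use dsupp in auto)
  have Ieq: "integral UNIV (\<delta> e) = integral {-e..e} (\<delta> e)"
    by (rule supp_int) (use dsupp in auto)
  have C': "integral {-e..e} (\<lambda>r. \<bar>\<delta> e r\<bar>) \<le> C" using C Ceq by simp
  have M0: "0 \<le> M" using qb[of XX] R by force
  have dc: "continuous_on UNIV (\<lambda>r. \<bar>\<delta> e r\<bar>)" by (intro continuous_intros dcont)
  have C0: "0 \<le> C" using C' integral_nonneg[OF cint[OF dc], of "-e" e] by auto
  have "0 \<le> 2*e*M*C" using M0 C0 e by simp
  then have d0: "0 < d0" using small2 by linarith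
  have eta: "0 \<le> \<eta>" using uc[of XX XX] R d0 by force
  have emc: "0 \<le> e*M*C" using M0 C0 e by simp
  have close: "\<bar>pd1 f (fst (x e XX r), snd (x e XX r)) - pd1 f XX\<bar> \<le> \<eta> \<and>
               \<bar>pd2 f (fst (x e XX r), snd (x e XX r)) - pd2 f XX\<bar> \<le> \<eta>" if r: "r \<le> e" for r
  proof -
    define y where "y = (fst (x e XX r), snd (x e XX r))"
    have b: "\<bar>fst (x e XX r) - X1\<bar> \<le> e*M*C \<and> \<bar>snd (x e XX r) - X2\<bar> \<le> e*M*C"
      by (rule T.boot[OF R qb C' small r])
    have "dist y XX = norm (fst (x e XX r) - X1, snd (x e XX r) - X2)"
      by (simp add: y_def dist_norm minus_prod_def)
    also have "\<dots> \<le> 2*e*M*C" using norm_pair_le[of "fst (x e XX r) - X1" "snd (x e XX r) - X2"] b by linarith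
    finally have dy: "dist y XX \<le> 2*e*M*C" .
    have "norm y \<le> norm XX + dist y XX" by (metis dist_commute dist_norm norm_triangle_sub)
    then have ny: "norm y \<le> R + 1" using dy R small by linarith
    have "\<bar>pd1 f y - pd1 f XX\<bar> < \<eta> \<and> \<bar>pd2 f y - pd2 f XX\<bar> < \<eta>"
      by (rule uc) (use ny R dy small2 in auto)
    then show ?thesis by (simp add: y_def)
  qed
  have e1: "\<bar>fst (xd x e XX e) - 1/2 * pd1 f XX * integral {-e..e} (\<delta> e)\<bar> \<le> \<eta> * C / 2"
    by (rule T.est1[OF C' eta]) (use close in auto)
  have e2: "\<bar>snd (xd x e XX e) - 1/2 * pd2 f XX * integral {-e..e} (\<delta> e)\<bar> \<le> \<eta> * C / 2"
    by (rule T.est2[OF C' eta]) (use close in auto)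
  have P1: "\<bar>pd1 f XX\<bar> \<le> M" and P2: "\<bar>pd2 f XX\<bar> \<le> M" using qb[of XX] R by auto
  have g: "\<bar>1/2 * P * integral {-e..e} (\<delta> e) - 1/2 * P\<bar> \<le> M*\<gamma>/2" if "\<bar>P\<bar> \<le> M" for P
  proof -
    have "\<bar>1/2 * P * integral {-e..e} (\<delta> e) - 1/2 * P\<bar> = 1/2 * (\<bar>P\<bar> * \<bar>integral UNIV (\<delta> e) - 1\<bar>)"
    proof -
      have "1/2 * P * integral {-e..e} (\<delta> e) - 1/2 * P = 1/2 * (P * (integral UNIV (\<delta> e) - 1))"
        by (simp add: Ieq algebra_simps)
      show ?thesis by (subst \<open>_ = 1/2 * (P * _)\<close>) (simp add: abs_mult)
    qed
    also have "\<dots> \<le> 1/2 * (M * \<gamma>)" using that I by (intro mult_left_mono mult_mono) auto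
    finally show ?thesis by simp
  qed
  show "\<bar>fst (xd x e XX e) - 1/2 * pd1 f XX\<bar> \<le> \<eta>*C/2 + M*\<gamma>/2"
    using e1 g[OF P1] by linarith
  show "\<bar>snd (xd x e XX e) - 1/2 * pd2 f XX\<bar> \<le> \<eta>*C/2 + M*\<gamma>/2"
    using e2 g[OF P2] by linarith
qed
end

lemma dist_pair_le: "dist (a, b) (c, d) \<le> dist a c + dist b d"
  by (simp add: dist_Pair_Pair) (metis abs_of_nonneg zero_le_dist sqrt_sum_squares_le_sum_abs)

lemma sq_est:
  fixes b P M \<beta> :: real
  assumes "\<bar>b - P/2\<bar> \<le> \<beta>" "\<bar>P\<bar> \<le> M"
  shows "\<bar>b\<^sup>2 - P\<^sup>2/4\<bar> \<le> \<beta> * (\<beta> + M)"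
proof -
  have "b\<^sup>2 - P\<^sup>2/4 = (b - P/2) * (b + P/2)" by (simp add: algebra_simps power2_eq_square)
  then have "\<bar>b\<^sup>2 - P\<^sup>2/4\<bar> = \<bar>b - P/2\<bar> * \<bar>b + P/2\<bar>" by (simp add: abs_mult)
  also have "\<dots> \<le> \<beta> * (\<beta> + M)"
    by (rule mult_mono) (use assms in auto)
  finally show ?thesis .
qed

lemma num:
  fixes b1 b2 P1 P2 M \<beta> \<epsilon> :: real
  assumes "\<bar>b1 - P1/2\<bar> \<le> \<beta>" "\<bar>b2 - P2/2\<bar> \<le> \<beta>" "\<bar>P1\<bar> \<le> M" "\<bar>P2\<bar> \<le> M"
    "\<beta> \<le> 1" "\<beta> * (4*(M+2)) \<le> \<epsilon>" "0 < \<epsilon>"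
  shows "dist (1::real, b1, b2, b1\<^sup>2 + b2\<^sup>2) (1, P1/2, P2/2, (P1\<^sup>2 + P2\<^sup>2)/4) < \<epsilon>"
proof -
  have b0: "0 \<le> \<beta>" using assms(1) by linarith
  have s1: "\<bar>b1\<^sup>2 - P1\<^sup>2/4\<bar> \<le> \<beta> * (\<beta> + M)" by (rule sq_est) (use assms in auto)
  have s2: "\<bar>b2\<^sup>2 - P2\<^sup>2/4\<bar> \<le> \<beta> * (\<beta> + M)" by (rule sq_est) (use assms in auto)
  have eq: "b1\<^sup>2 + b2\<^sup>2 - (P1\<^sup>2 + P2\<^sup>2)/4 = (b1\<^sup>2 - P1\<^sup>2/4) + (b2\<^sup>2 - P2\<^sup>2/4)" by (simp add: field_simps)
  have tri: "\<bar>b1\<^sup>2 + b2\<^sup>2 - (P1\<^sup>2 + P2\<^sup>2)/4\<bar> \<le> \<bar>b1\<^sup>2 - P1\<^sup>2/4\<bar> + \<bar>b2\<^sup>2 - P2\<^sup>2/4\<bar>"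
    unfolding eq by (rule abs_triangle_ineq)
  have "dist (1::real, b1, b2, b1\<^sup>2 + b2\<^sup>2) (1, P1/2, P2/2, (P1\<^sup>2 + P2\<^sup>2)/4)
     \<le> dist (1::real) 1 + dist (b1, b2, b1\<^sup>2 + b2\<^sup>2) (P1/2, P2/2, (P1\<^sup>2 + P2\<^sup>2)/4)"
    by (rule dist_pair_le)
  also have "\<dots> \<le> 0 + (dist b1 (P1/2) + (dist b2 (P2/2) + dist (b1\<^sup>2 + b2\<^sup>2) ((P1\<^sup>2 + P2\<^sup>2)/4)))"
    using dist_pair_le[of b1 "(b2, b1\<^sup>2 + b2\<^sup>2)" "P1/2" "(P2/2, (P1\<^sup>2 + P2\<^sup>2)/4)"]
      dist_pair_le[of b2 "b1\<^sup>2 + b2\<^sup>2" "P2/2" "(P1\<^sup>2 + P2\<^sup>2)/4"] by simp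
  also have "\<dots> \<le> \<beta> + \<beta> + 2 * (\<beta> * (\<beta> + M))"
    using assms(1,2) s1 s2 tri unfolding dist_real_def by linarith
  also have "\<dots> \<le> \<beta> * (2*(M+2))"
  proof -
    have "\<beta> * \<beta> \<le> \<beta> * 1" using b0 assms(5) by (rule mult_left_mono[rotated])
    then show ?thesis by (simp add: algebra_simps)
  qed
  also have "\<dots> < \<epsilon>"
  proof -
    have M0: "0 \<le> M" using assms(3) by linarith
    have "\<beta> * (2*(M+2)) \<le> \<epsilon>/2" using assms(6) by (simp add: algebra_simps)
    then show ?thesis using assms(7) by linarith
  qed
  finally show ?thesis .
qed

theorem proposition7p1:
  fixes f :: "real \<times> real \<Rightarrow> real"
    and \<delta> :: "real \<Rightarrow> real \<Rightarrow> real"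
    and x :: "real \<Rightarrow> real \<times> real \<Rightarrow> real \<Rightarrow> real \<times> real"
  assumes f_smooth: "smooth f"
    and delta: "strict_delta_net \<delta>"
    and x_smooth: "\<forall>e\<in>{0<..1}. smooth (\<lambda>q :: (real \<times> real) \<times> real. x e (fst q) (snd q))"
    and x_ode: "\<forall>K :: (real \<times> real) set. compact K \<longrightarrow> (\<exists>eK>0. \<forall>X\<in>K. \<forall>e\<in>{0<..1}. e \<le> eK \<longrightarrow>
        x e X (-1) = X \<and> xd x e X (-1) = (0, 0) \<and>
        (\<forall>U. ((\<lambda>u. x e X u) has_vector_derivative xd x e X U) (at U) \<and>
             (xd x e X has_vector_derivative
                ((1/2) * pd1 f (x e X U) * \<delta> e U, (1/2) * pd2 f (x e X U) * \<delta> e U)) (at U)))"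
  shows "\<forall>K. compact K \<and> K \<subseteq> {p. fst p \<noteq> 0} \<longrightarrow>
           uniform_limit K (\<lambda>e. dU (t_eps f \<delta> x e)) (dU (t_lim f)) (at_right 0)
         \<and> uniform_limit K (\<lambda>e. dU (s_eps f \<delta> x e)) (dU (s_lim f)) (at_right 0)"
proof (intro allI impI)
  fix K :: "(real \<times> real \<times> real \<times> real) set"
  assume "compact K \<and> K \<subseteq> {p. fst p \<noteq> 0}"
  then have K: "compact K" and K0: "\<And>p. p \<in> K \<Longrightarrow> fst p \<noteq> 0" by auto
  have dsm: "\<And>e. 0 < e \<Longrightarrow> e \<le> 1 \<Longrightarrow> continuous_on UNIV (\<delta> e) \<and> (\<forall>r. \<delta> e r \<noteq> 0 \<longrightarrow> -e \<le> r \<and> r \<le> e)"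
    using delta unfolding strict_delta_net_def by (auto intro: smooth_cont)
  obtain C where C0: "C > 0" and evC: "\<forall>\<^sub>F e in at_right 0. integral UNIV (\<lambda>u. \<bar>\<delta> e u\<bar>) \<le> C"
    using delta unfolding strict_delta_net_def by blast
  have Ilim: "((\<lambda>e. integral UNIV (\<delta> e)) \<longlongrightarrow> 1) (at_right 0)"
    using delta unfolding strict_delta_net_def by blast
  have main: "\<forall>\<^sub>F e in at_right 0. \<forall>p\<in>K. dist (dU (t_eps f \<delta> x e) p) (dU (t_lim f) p) < \<epsilon>
       \<and> dist (dU (s_eps f \<delta> x e) p) (dU (s_lim f) p) < \<epsilon>" if eps: "\<epsilon> > 0" for \<epsilon>
  proof (cases "K = {}")
    case True then show ?thesis by simp
  next
    case False
    have "continuous_on K (\<lambda>p. \<bar>fst p\<bar>)" by (intro continuous_intros)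
    then obtain p0 where p0: "p0 \<in> K" and p0min: "\<And>p. p \<in> K \<Longrightarrow> \<bar>fst p0\<bar> \<le> \<bar>fst p\<bar>"
      using continuous_attains_inf[OF K False, of "\<lambda>p. \<bar>fst p\<bar>"] by blast
    define c where "c = \<bar>fst p0\<bar>"
    have c0: "c > 0" using K0[OF p0] by (simp add: c_def)
    define KX where "KX = (\<lambda>p. (fst (snd p), fst (snd (snd p)))) ` K"
    have KXc: "compact KX" unfolding KX_def
      by (rule compact_continuous_image[OF _ K]) (intro continuous_intros)
    obtain eK where eK: "eK > 0" and odeK: "\<forall>X\<in>KX. \<forall>e\<in>{0<..1}. e \<le> eK \<longrightarrow>
        x e X (-1) = X \<and> xd x e X (-1) = (0, 0) \<and>
        (\<forall>U. ((\<lambda>u. x e X u) has_vector_derivative xd x e X U) (at U) \<and>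
             (xd x e X has_vector_derivative
                ((1/2) * pd1 f (x e X U) * \<delta> e U, (1/2) * pd2 f (x e X U) * \<delta> e U)) (at U))"
      using x_ode KXc by blast
    obtain R where R: "\<And>X. X \<in> KX \<Longrightarrow> norm X \<le> R"
      using compact_imp_bounded[OF KXc] unfolding bounded_iff by blast
    define S where "S = cball (0::real\<times>real) (R+1)"
    have Sc: "compact S" by (simp add: S_def)
    obtain M1 where M1: "\<And>y. y \<in> S \<Longrightarrow> norm (pd1 f y) \<le> M1"
      using compact_imp_bounded[OF compact_continuous_image[OF continuous_on_subset[OF pd1_cont[OF f_smooth]] Sc]]
      unfolding bounded_iff by blast
    obtain M2 where M2: "\<And>y. y \<in> S \<Longrightarrow> norm (pd2 f y) \<le> M2"
      using compact_imp_bounded[OF compact_continuous_image[OF continuous_on_subset[OF pd2_cont[OF f_smooth]] Sc]]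
      unfolding bounded_iff by blast
    define M where "M = max 1 (max M1 M2)"
    have M1le: "1 \<le> M" by (simp add: M_def)
    have qb: "\<And>y. norm y \<le> R+1 \<Longrightarrow> \<bar>pd1 f y\<bar> \<le> M \<and> \<bar>pd2 f y\<bar> \<le> M"
      using M1 M2 by (force simp: S_def M_def)
    define \<beta> where "\<beta> = min 1 (\<epsilon> / (4*(M+2)))"
    have \<beta>0: "\<beta> > 0" using eps M1le by (simp add: \<beta>_def)
    have \<beta>1: "\<beta> \<le> 1" by (simp add: \<beta>_def)
    have \<beta>e: "\<beta> * (4*(M+2)) \<le> \<epsilon>"
    proof -
      have "\<beta> \<le> \<epsilon> / (4*(M+2))" by (simp add: \<beta>_def)
      then show ?thesis using M1le by (simp add: field_simps)
    qed
    define \<eta> where "\<eta> = \<beta> / C"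
    have \<eta>0: "\<eta> > 0" using \<beta>0 C0 by (simp add: \<eta>_def)
    define \<gamma> where "\<gamma> = \<beta> / M"
    have \<gamma>0: "\<gamma> > 0" using \<beta>0 M1le by (simp add: \<gamma>_def)
    have \<beta>sum: "\<eta>*C/2 + M*\<gamma>/2 = \<beta>" using C0 M1le by (simp add: \<eta>_def \<gamma>_def)
    have uc1: "uniformly_continuous_on S (pd1 f)"
      by (rule compact_uniformly_continuous[OF continuous_on_subset[OF pd1_cont[OF f_smooth]] Sc]) simp
    have uc2: "uniformly_continuous_on S (pd2 f)"
      by (rule compact_uniformly_continuous[OF continuous_on_subset[OF pd2_cont[OF f_smooth]] Sc]) simp
    obtain d1 where d1: "d1 > 0" "\<And>y y'. y \<in> S \<Longrightarrow> y' \<in> S \<Longrightarrow> dist y' y < d1 \<Longrightarrow> dist (pd1 f y') (pd1 f y) < \<eta>"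
      using uc1 \<eta>0 unfolding uniformly_continuous_on_def by metis
    obtain d2 where d2: "d2 > 0" "\<And>y y'. y \<in> S \<Longrightarrow> y' \<in> S \<Longrightarrow> dist y' y < d2 \<Longrightarrow> dist (pd2 f y') (pd2 f y) < \<eta>"
      using uc2 \<eta>0 unfolding uniformly_continuous_on_def by metis
    define d0 where "d0 = min d1 d2"
    have d00: "d0 > 0" using d1 d2 by (simp add: d0_def)
    have uc: "\<And>y y'. norm y \<le> R+1 \<Longrightarrow> norm y' \<le> R+1 \<Longrightarrow> dist y' y < d0 \<Longrightarrow>
          \<bar>pd1 f y' - pd1 f y\<bar> < \<eta> \<and> \<bar>pd2 f y' - pd2 f y\<bar> < \<eta>"
      using d1 d2 by (auto simp: d0_def S_def dist_real_def)
    define \<kappa> where "\<kappa> = min (min c eK) (min 1 (min (1/2) d0 / (2*M*C)))"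
    have \<kappa>0: "\<kappa> > 0" using c0 eK d00 M1le C0 by (simp add: \<kappa>_def)
    have ev\<kappa>: "\<forall>\<^sub>F e in at_right 0. 0 < e \<and> e < \<kappa>"
      unfolding eventually_at_right_field using \<kappa>0 by blast
    have evI: "\<forall>\<^sub>F e in at_right 0. dist (integral UNIV (\<delta> e)) 1 < \<gamma>"
      using Ilim \<gamma>0 by (rule tendstoD)
    show ?thesis
    proof (rule eventually_mono[OF eventually_conj[OF ev\<kappa> eventually_conj[OF evC evI]]])
      fix e assume ee: "(0 < e \<and> e < \<kappa>) \<and> integral UNIV (\<lambda>u. \<bar>\<delta> e u\<bar>) \<le> C \<and> dist (integral UNIV (\<delta> e)) 1 < \<gamma>"
      then have e0: "0 < e" and ec: "e < c" and eeK: "e \<le> eK" and e1: "e \<le> 1"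
        and Ce: "integral UNIV (\<lambda>u. \<bar>\<delta> e u\<bar>) \<le> C" and Ie: "\<bar>integral UNIV (\<delta> e) - 1\<bar> \<le> \<gamma>"
        by (auto simp: \<kappa>_def dist_real_def)
      have small: "2*e*M*C < 1/2 \<and> 2*e*M*C < d0"
      proof -
        have "e < min (1/2) d0 / (2*M*C)" using ee by (simp add: \<kappa>_def)
        then have "e * (2*M*C) < min (1/2) d0" using M1le C0 by (simp add: pos_less_divide_eq)
        then show ?thesis by (simp add: algebra_simps)
      qed
      show "\<forall>p\<in>K. dist (dU (t_eps f \<delta> x e) p) (dU (t_lim f) p) < \<epsilon>
       \<and> dist (dU (s_eps f \<delta> x e) p) (dU (s_lim f) p) < \<epsilon>"
      proof
        fix p assume pK: "p \<in> K"
        obtain U X1 X2 V where p: "p = (U, X1, X2, V)" by (cases p) auto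
        have XK: "(X1, X2) \<in> KX" using pK by (force simp: KX_def p)
        have Uc: "c \<le> \<bar>U\<bar>" using p0min[OF pK] by (simp add: c_def p)
        interpret O: odeF f \<delta> x e X1 X2
        proof
          show "smooth f" by (rule f_smooth)
          show "0 < e" "e \<le> 1" by (rule e0 e1)+
          show "continuous_on UNIV (\<delta> e)" "\<And>r. \<delta> e r \<noteq> 0 \<Longrightarrow> -e \<le> r \<and> r \<le> e"
            using dsm[OF e0 e1] by auto
          show "x e (X1,X2) (-1) = (X1,X2) \<and> xd x e (X1,X2) (-1) = (0, 0) \<and>
            (\<forall>U. ((\<lambda>u. x e (X1,X2) u) has_vector_derivative xd x e (X1,X2) U) (at U) \<and>
             (xd x e (X1,X2) has_vector_derivative
                ((1/2) * pd1 f (x e (X1,X2) U) * \<delta> e U, (1/2) * pd2 f (x e (X1,X2) U) * \<delta> e U)) (at U))"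
          proof -
            have eI: "e \<in> {0<..1}" using e0 e1 by simp
            show ?thesis using odeK[rule_format, OF XK eI eeK] by simp
          qed
        qed
        interpret T: traj e "\<delta> e" "pd1 f" "pd2 f" "\<lambda>u. fst (x e (X1,X2) u)" "\<lambda>u. snd (x e (X1,X2) u)"
          "\<lambda>u. fst (xd x e (X1,X2) u)" "\<lambda>u. snd (xd x e (X1,X2) u)" X1 X2
          by (rule O.is_traj)
        have U0: "U \<noteq> 0" using K0[OF pK] by (simp add: p)
        have dz: "\<delta> e U = 0" using T.d_out[of U] Uc ec by linarith
        show "dist (dU (t_eps f \<delta> x e) p) (dU (t_lim f) p) < \<epsilon>
          \<and> dist (dU (s_eps f \<delta> x e) p) (dU (s_lim f) p) < \<epsilon>"
        proof (cases "U < 0")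
          case True
          have "U \<le> -e" using Uc ec True by linarith
          then have "fst (xd x e (X1,X2) U) = 0" "snd (xd x e (X1,X2) U) = 0"
            using T.left by auto
          then show ?thesis using eps True
            by (simp add: p O.dU_t O.dU_s dU_t_lim[OF U0] dU_s_lim[OF U0] dz heav_def)
        next
          case False
          then have Ue: "e \<le> U" using Uc ec by linarith
          have hU: "heav U = 1" using False U0 by (simp add: heav_def)
          have XR: "norm (X1,X2) \<le> R" using R[OF XK] .
          have est: "\<bar>fst (xd x e (X1,X2) e) - 1/2 * pd1 f (X1,X2)\<bar> \<le> \<beta>"
                    "\<bar>snd (xd x e (X1,X2) e) - 1/2 * pd2 f (X1,X2)\<bar> \<le> \<beta>"
            using O.est_point[OF XR qb Ce _ _ uc Ie] small \<beta>sum by auto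
          have P: "\<bar>pd1 f (X1,X2)\<bar> \<le> M" "\<bar>pd2 f (X1,X2)\<bar> \<le> M" using qb XR by auto
          have nm: "dist (1::real, fst (xd x e (X1,X2) e), snd (xd x e (X1,X2) e),
                 (fst (xd x e (X1,X2) e))\<^sup>2 + (snd (xd x e (X1,X2) e))\<^sup>2)
              (1, pd1 f (X1,X2)/2, pd2 f (X1,X2)/2, ((pd1 f (X1,X2))\<^sup>2 + (pd2 f (X1,X2))\<^sup>2)/4) < \<epsilon>"
            by (rule num[OF _ _ P \<beta>1 \<beta>e eps]) (use est in auto)
          have r1: "fst (xd x e (X1,X2) U) = fst (xd x e (X1,X2) e)"
            "snd (xd x e (X1,X2) U) = snd (xd x e (X1,X2) e)" using T.right[OF Ue] by auto
          show ?thesis using nm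
            by (simp add: p O.dU_t O.dU_s dU_t_lim[OF U0] dU_s_lim[OF U0] dz hU r1)
        qed
      qed
    qed
  qed
  show "uniform_limit K (\<lambda>e. dU (t_eps f \<delta> x e)) (dU (t_lim f)) (at_right 0)
         \<and> uniform_limit K (\<lambda>e. dU (s_eps f \<delta> x e)) (dU (s_lim f)) (at_right 0)"
  proof
    show "uniform_limit K (\<lambda>e. dU (t_eps f \<delta> x e)) (dU (t_lim f)) (at_right 0)"
      by (rule uniform_limitI) (rule eventually_mono[OF main], auto)
    show "uniform_limit K (\<lambda>e. dU (s_eps f \<delta> x e)) (dU (s_lim f)) (at_right 0)"
      by (rule uniform_limitI) (rule eventually_mono[OF main], auto)
  qed
qed

end
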